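(* Every subset of every free boolean algebra is almost $\omega^{\mathrm{op}}$-like.
   Context: Subsets of a boolean algebra are ordered by the boolean order. A poset is $\kappa^{\mathrm{op}}$-like if no element is below $\kappa$-many elements of it. A poset $Q$ is almost $\kappa^{\mathrm{op}}$-like if it has a dense subset $D$ (i.e. for every $q\in Q$ there is $d\in D$ with $d\leq q$) that is $\kappa^{\mathrm{op}}$-like. *)

theory Defs
  imports Main
begin

inductive_set ba_generated :: "'a::boolean_algebra set \<Rightarrow> 'a set" for X where
  gen_base: "x \<in> X \<Longrightarrow> x \<in> ba_generated X"
| gen_bot: "bot \<in> ba_generated X"
| gen_top: "top \<in> ba_generated X"
| gen_compl: "x \<in> ba_generated X \<Longrightarrow> - x \<in> ba_generated X"
| gen_inf: "x \<in> ba_generated X \<Longrightarrow> y \<in> ba_generated X \<Longrightarrow> inf x y \<in> ba_generated X"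
| gen_sup: "x \<in> ba_generated X \<Longrightarrow> y \<in> ba_generated X \<Longrightarrow> sup x y \<in> ba_generated X"

definition ba_meet :: "'a::boolean_algebra set \<Rightarrow> 'a" where
  "ba_meet F = Finite_Set.fold inf top F"

definition ba_independent :: "'a::boolean_algebra set \<Rightarrow> bool" where
  "ba_independent X \<longleftrightarrow>
     (\<forall>F \<epsilon>. finite F \<longrightarrow> F \<subseteq> X \<longrightarrow>
        ba_meet ((\<lambda>x. if \<epsilon> x then x else - x) ` F) \<noteq> bot)"

definition free_boolean_algebra :: "'a::boolean_algebra itself \<Rightarrow> bool" where
  "free_boolean_algebra _ \<longleftrightarrow>
     (\<exists>X::'a set. ba_independent X \<and> ba_generated X = UNIV)"

definition dense_in :: "'a::order set \<Rightarrow> 'a set \<Rightarrow> bool" where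
  "dense_in D Q \<longleftrightarrow> D \<subseteq> Q \<and> (\<forall>q\<in>Q. \<exists>d\<in>D. d \<le> q)"

definition omega_op_like :: "'a::order set \<Rightarrow> bool" where
  "omega_op_like D \<longleftrightarrow> (\<forall>p\<in>D. finite {d\<in>D. p \<le> d})"

definition almost_omega_op_like :: "'a::order set \<Rightarrow> bool" where
  "almost_omega_op_like Q \<longleftrightarrow> (\<exists>D. dense_in D Q \<and> omega_op_like D)"

end

theory Submission
  imports Defs "HOL-Library.Countable_Set"
begin

unbundle lattice_syntax
unbundle cardinal_syntax

abbreviation B :: "'a::boolean_algebra set \<Rightarrow> 'a set" where "B \<equiv> ba_generated"

lemma B_mono: assumes "S \<subseteq> T" "x \<in> B S" shows "x \<in> B T"
  using assms(2) by induction (use assms(1) in \<open>auto intro: ba_generated.intros\<close>)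

lemma B_empty: "x \<in> B {} \<Longrightarrow> x = bot \<or> x = top"
  by (induction x rule: ba_generated.induct) auto

lemma shannon_eq1: "(w::'a::boolean_algebra) \<sqinter> ((w \<sqinter> a) \<squnion> (- w \<sqinter> b)) = w \<sqinter> a"
  by (simp only: inf_sup_distrib1 inf_compl_bot_left2 sup_bot_right inf.left_idem)
lemma shannon_eq0: "- (w::'a::boolean_algebra) \<sqinter> ((w \<sqinter> a) \<squnion> (- w \<sqinter> b)) = - w \<sqinter> b"
  by (simp only: inf_sup_distrib1 inf_compl_bot_left1 sup_bot_left inf.left_idem)

lemma compl_absorb: "(w::'a::boolean_algebra) \<sqinter> - y = w \<sqinter> - (w \<sqinter> y)"
  by (simp add: inf_sup_distrib1)

lemma self_split: "(x::'a::boolean_algebra) = (w \<sqinter> x) \<squnion> (- w \<sqinter> x)"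
proof -
  have "x = (w \<squnion> - w) \<sqinter> x" by (simp only: sup_compl_top inf_top_left)
  also have "\<dots> = (w \<sqinter> x) \<squnion> (- w \<sqinter> x)" by (rule inf_sup_distrib2)
  finally show ?thesis .
qed

lemma split_ext: "(w::'a::boolean_algebra) \<sqinter> x = w \<sqinter> y \<Longrightarrow> - w \<sqinter> x = - w \<sqinter> y \<Longrightarrow> x = y"
  by (metis self_split)


lemma inf_dist_self: "(w::'a::boolean_algebra) \<sqinter> (x \<sqinter> y) = (w \<sqinter> x) \<sqinter> (w \<sqinter> y)"
  by (simp add: inf_aci)

lemma shannon:
  assumes "a \<in> B (insert w W)"
  shows "\<exists>a1 a0. a1 \<in> B W \<and> a0 \<in> B W \<and> a = (w \<sqinter> a1) \<squnion> (- w \<sqinter> a0)"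
  using assms
proof (induction a rule: ba_generated.induct)
  case (gen_base x)
  show ?case
  proof (cases "x = w")
    case True
    then show ?thesis by (intro exI[of _ top] exI[of _ bot]) (auto intro: ba_generated.intros)
  next
    case False
    then have "x \<in> W" using gen_base by auto
    then show ?thesis by (intro exI[of _ x] exI[of _ x]) (auto intro: ba_generated.intros self_split)
  qed
next
  case gen_bot
  then show ?case by (intro exI[of _ bot] exI[of _ bot]) (auto intro: ba_generated.intros)
next
  case gen_top
  then show ?case by (intro exI[of _ top] exI[of _ top]) (auto intro: ba_generated.intros self_split)
next
  case (gen_compl x)
  then obtain a1 a0 where h: "a1 \<in> B W" "a0 \<in> B W" "x = (w \<sqinter> a1) \<squnion> (- w \<sqinter> a0)" by blast
  have e1: "w \<sqinter> - x = w \<sqinter> - a1"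
  proof -
    have "w \<sqinter> - x = w \<sqinter> - (w \<sqinter> x)" by (rule compl_absorb)
    also have "\<dots> = w \<sqinter> - (w \<sqinter> a1)" by (simp only: h(3) shannon_eq1)
    also have "\<dots> = w \<sqinter> - a1" by (rule compl_absorb[symmetric])
    finally show ?thesis .
  qed
  have e0: "- w \<sqinter> - x = - w \<sqinter> - a0"
  proof -
    have "- w \<sqinter> - x = - w \<sqinter> - (- w \<sqinter> x)" by (rule compl_absorb)
    also have "\<dots> = - w \<sqinter> - (- w \<sqinter> a0)" by (simp only: h(3) shannon_eq0)
    also have "\<dots> = - w \<sqinter> - a0" by (rule compl_absorb[symmetric])
    finally show ?thesis .
  qed
  have "- x = (w \<sqinter> - a1) \<squnion> (- w \<sqinter> - a0)"
    by (rule split_ext[of w]) (simp_all only: e1 e0 shannon_eq1 shannon_eq0)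
  then show ?case using h by (blast intro: ba_generated.intros)
next
  case (gen_inf x y)
  then obtain a1 a0 b1 b0 where h: "a1 \<in> B W" "a0 \<in> B W" "x = (w \<sqinter> a1) \<squnion> (- w \<sqinter> a0)"
     "b1 \<in> B W" "b0 \<in> B W" "y = (w \<sqinter> b1) \<squnion> (- w \<sqinter> b0)" by blast
  have "x \<sqinter> y = (w \<sqinter> (a1 \<sqinter> b1)) \<squnion> (- w \<sqinter> (a0 \<sqinter> b0))"
  proof (rule split_ext[of w])
    have "w \<sqinter> (x \<sqinter> y) = (w \<sqinter> x) \<sqinter> (w \<sqinter> y)" by (rule inf_dist_self)
    also have "\<dots> = (w \<sqinter> a1) \<sqinter> (w \<sqinter> b1)" by (simp only: h(3,6) shannon_eq1)
    also have "\<dots> = w \<sqinter> (a1 \<sqinter> b1)" by (rule inf_dist_self[symmetric])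
    finally show "w \<sqinter> (x \<sqinter> y) = w \<sqinter> (w \<sqinter> (a1 \<sqinter> b1) \<squnion> - w \<sqinter> (a0 \<sqinter> b0))" by (simp only: shannon_eq1)
    have "- w \<sqinter> (x \<sqinter> y) = (- w \<sqinter> x) \<sqinter> (- w \<sqinter> y)" by (rule inf_dist_self)
    also have "\<dots> = (- w \<sqinter> a0) \<sqinter> (- w \<sqinter> b0)" by (simp only: h(3,6) shannon_eq0)
    also have "\<dots> = - w \<sqinter> (a0 \<sqinter> b0)" by (rule inf_dist_self[symmetric])
    finally show "- w \<sqinter> (x \<sqinter> y) = - w \<sqinter> (w \<sqinter> (a1 \<sqinter> b1) \<squnion> - w \<sqinter> (a0 \<sqinter> b0))" by (simp only: shannon_eq0)
  qed
  then show ?case using h by (blast intro: ba_generated.intros)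
next
  case (gen_sup x y)
  then obtain a1 a0 b1 b0 where h: "a1 \<in> B W" "a0 \<in> B W" "x = (w \<sqinter> a1) \<squnion> (- w \<sqinter> a0)"
     "b1 \<in> B W" "b0 \<in> B W" "y = (w \<sqinter> b1) \<squnion> (- w \<sqinter> b0)" by blast
  have "x \<squnion> y = (w \<sqinter> (a1 \<squnion> b1)) \<squnion> (- w \<sqinter> (a0 \<squnion> b0))"
  proof (rule split_ext[of w])
    have "w \<sqinter> (x \<squnion> y) = (w \<sqinter> x) \<squnion> (w \<sqinter> y)" by (rule inf_sup_distrib1)
    also have "\<dots> = (w \<sqinter> a1) \<squnion> (w \<sqinter> b1)" by (simp only: h(3,6) shannon_eq1)
    also have "\<dots> = w \<sqinter> (a1 \<squnion> b1)" by (rule inf_sup_distrib1[symmetric])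
    finally show "w \<sqinter> (x \<squnion> y) = w \<sqinter> (w \<sqinter> (a1 \<squnion> b1) \<squnion> - w \<sqinter> (a0 \<squnion> b0))" by (simp only: shannon_eq1)
    have "- w \<sqinter> (x \<squnion> y) = (- w \<sqinter> x) \<squnion> (- w \<sqinter> y)" by (rule inf_sup_distrib1)
    also have "\<dots> = (- w \<sqinter> a0) \<squnion> (- w \<sqinter> b0)" by (simp only: h(3,6) shannon_eq0)
    also have "\<dots> = - w \<sqinter> (a0 \<squnion> b0)" by (rule inf_sup_distrib1[symmetric])
    finally show "- w \<sqinter> (x \<squnion> y) = - w \<sqinter> (w \<sqinter> (a1 \<squnion> b1) \<squnion> - w \<sqinter> (a0 \<squnion> b0))" by (simp only: shannon_eq0)
  qed
  then show ?case using h by (blast intro: ba_generated.intros)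
qed

definition sg :: "('a \<Rightarrow> bool) \<Rightarrow> 'a::boolean_algebra \<Rightarrow> 'a" where
  "sg \<epsilon> x = (if \<epsilon> x then x else - x)"

lemma ba_meet_insert: "finite (A::'a::boolean_algebra set) \<Longrightarrow> ba_meet (insert x A) = x \<sqinter> ba_meet A"
proof -
  assume "finite A"
  interpret comp_fun_idem "inf :: 'a \<Rightarrow> 'a \<Rightarrow> 'a" by (fact comp_fun_idem_inf)
  show ?thesis unfolding ba_meet_def using \<open>finite A\<close> by simp
qed

lemma ba_meet_empty: "ba_meet {} = top"
  by (simp add: ba_meet_def)

lemma indepD: "ba_independent X \<Longrightarrow> finite G \<Longrightarrow> G \<subseteq> X \<Longrightarrow> ba_meet (sg \<epsilon> ` G) \<noteq> bot"
  unfolding ba_independent_def sg_def by blast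

lemma sg_insert_meet:
  assumes "finite G" "w \<notin> G"
  shows "ba_meet (sg (\<epsilon>(w := b)) ` insert w G) = (if b then w else - w) \<sqinter> ba_meet (sg \<epsilon> ` G)"
proof -
  have "sg (\<epsilon>(w := b)) ` G = sg \<epsilon> ` G" using assms(2) by (auto simp: sg_def)
  then show ?thesis using assms(1) by (simp add: ba_meet_insert sg_def)
qed

lemma indep_nonzero:
  assumes ind: "ba_independent X" and W: "finite W" "W \<subseteq> X"
  shows "z \<in> B W \<Longrightarrow> finite G \<Longrightarrow> G \<subseteq> X \<Longrightarrow> G \<inter> W = {} \<Longrightarrow>
         z \<sqinter> ba_meet (sg \<epsilon> ` G) = bot \<Longrightarrow> z = bot"
  using W
proof (induction W arbitrary: z G \<epsilon> rule: finite_induct)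
  case empty
  then have "z = bot \<or> z = top" using B_empty by blast
  moreover have "ba_meet (sg \<epsilon> ` G) \<noteq> bot" using indepD[OF ind empty(2,3)] .
  ultimately show ?case using empty(5) by auto
next
  case (insert w W)
  from shannon[OF insert.prems(1)] obtain z1 z0 where
    h: "z1 \<in> B W" "z0 \<in> B W" "z = (w \<sqinter> z1) \<squnion> (- w \<sqinter> z0)" by blast
  let ?m = "ba_meet (sg \<epsilon> ` G)"
  have wG: "w \<notin> G" using insert.prems(4) by auto
  have fG: "finite (insert w G)" "insert w G \<subseteq> X" using insert.prems(2,3) insert.hyps insert.prems by auto
  have dis: "insert w G \<inter> W = {}" using insert.prems(4) insert.hyps(2) by auto
  have a1: "w \<sqinter> z1 \<le> z" unfolding h(3) by (rule sup.cobounded1)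
  have "z1 \<sqinter> (w \<sqinter> ?m) = (w \<sqinter> z1) \<sqinter> ?m" by (simp add: inf_aci)
  then have "z1 \<sqinter> (w \<sqinter> ?m) \<le> z \<sqinter> ?m" using inf_mono[OF a1 order_refl[of ?m]] by simp
  then have eq1: "z1 \<sqinter> ba_meet (sg (\<epsilon>(w := True)) ` insert w G) = bot"
    using insert.prems(5) sg_insert_meet[OF insert.prems(2) wG, of \<epsilon> True] by (simp add: bot_unique)
  have z1: "z1 = bot" by (rule insert.IH[OF h(1) fG dis eq1]) (use insert.prems(6) in auto)
  have a0: "- w \<sqinter> z0 \<le> z" unfolding h(3) by (rule sup.cobounded2)
  have "z0 \<sqinter> (- w \<sqinter> ?m) = (- w \<sqinter> z0) \<sqinter> ?m" by (simp add: inf_aci)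
  then have "z0 \<sqinter> (- w \<sqinter> ?m) \<le> z \<sqinter> ?m" using inf_mono[OF a0 order_refl[of ?m]] by simp
  then have eq0: "z0 \<sqinter> ba_meet (sg (\<epsilon>(w := False)) ` insert w G) = bot"
    using insert.prems(5) sg_insert_meet[OF insert.prems(2) wG, of \<epsilon> False] by (simp add: bot_unique)
  have z0: "z0 = bot" by (rule insert.IH[OF h(2) fG dis eq0]) (use insert.prems(6) in auto)
  show ?case using h(3) z1 z0 by simp
qed

lemma B_finitary: "x \<in> B Y \<Longrightarrow> \<exists>F. finite F \<and> F \<subseteq> Y \<and> x \<in> B F"
proof (induction x rule: ba_generated.induct)
  case (gen_base x) then show ?case by (intro exI[of _ "{x}"]) (auto intro: ba_generated.intros)
next
  case gen_bot then show ?case by (intro exI[of _ "{}"]) (auto intro: ba_generated.intros)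
next
  case gen_top then show ?case by (intro exI[of _ "{}"]) (auto intro: ba_generated.intros)
next
  case (gen_compl x) then show ?case by (auto intro: ba_generated.intros)
next
  case (gen_inf x y)
  then obtain F1 F2 where "finite F1" "F1 \<subseteq> Y" "x \<in> B F1" "finite F2" "F2 \<subseteq> Y" "y \<in> B F2" by blast
  then show ?case
    by (intro exI[of _ "F1 \<union> F2"]) (auto intro: ba_generated.intros B_mono[of F1 "F1 \<union> F2"] B_mono[of F2 "F1 \<union> F2"])
next
  case (gen_sup x y)
  then obtain F1 F2 where "finite F1" "F1 \<subseteq> Y" "x \<in> B F1" "finite F2" "F2 \<subseteq> Y" "y \<in> B F2" by blast
  then show ?case
    by (intro exI[of _ "F1 \<union> F2"]) (auto intro: ba_generated.intros B_mono[of F1 "F1 \<union> F2"] B_mono[of F2 "F1 \<union> F2"])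
qed

lemma B_finite: "finite W \<Longrightarrow> finite (B (W::'a::boolean_algebra set))"
proof (induction W rule: finite_induct)
  case empty
  have "B ({}::'a set) \<subseteq> {bot, top}" using B_empty by blast
  then show ?case by (rule finite_subset) simp
next
  case (insert w W)
  have "B (insert w W) \<subseteq> (\<lambda>(a, b). (w \<sqinter> a) \<squnion> (- w \<sqinter> b)) ` (B W \<times> B W)"
  proof
    fix x assume "x \<in> B (insert w W)"
    from shannon[OF this] obtain a1 a0 where "a1 \<in> B W" "a0 \<in> B W" "x = (w \<sqinter> a1) \<squnion> (- w \<sqinter> a0)" by blast
    then show "x \<in> (\<lambda>(a, b). (w \<sqinter> a) \<squnion> (- w \<sqinter> b)) ` (B W \<times> B W)" by force
  qed
  then show ?case by (rule finite_subset) (use insert.IH in simp)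
qed

lemma meet_single: "ba_meet (sg \<epsilon> ` {v}) = sg \<epsilon> v"
  by (simp add: ba_meet_insert ba_meet_empty)

lemma le_sup_compl: "(v::'a::boolean_algebra) \<sqinter> a \<le> b \<Longrightarrow> a \<le> b \<squnion> - v"
  by (simp add: shunt1 inf_commute sup_commute)

lemma inf_sup_compl_le: "(v::'a::boolean_algebra) \<sqinter> (b \<squnion> - v) \<le> b"
  by (simp add: inf_sup_distrib1)

lemma interp_fin:
  assumes ind: "ba_independent X" and S: "finite S" "S \<subseteq> X" and T: "finite T" "T \<subseteq> X"
  shows "a \<in> B S \<Longrightarrow> b \<in> B T \<Longrightarrow> a \<le> b \<Longrightarrow> \<exists>c \<in> B (S \<inter> T). a \<le> c \<and> c \<le> b"
  using S
proof (induction S arbitrary: a b rule: finite_induct)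
  case empty
  then show ?case by auto
next
  case (insert v S)
  from shannon[OF insert.prems(1)] obtain a1 a0 where
    h: "a1 \<in> B S" "a0 \<in> B S" "a = (v \<sqinter> a1) \<squnion> (- v \<sqinter> a0)" by blast
  have av1: "v \<sqinter> a1 \<le> b" using insert.prems(3) h(3) by (metis le_supE)
  have av0: "- v \<sqinter> a0 \<le> b" using insert.prems(3) h(3) by (metis le_supE)
  have SX: "S \<subseteq> X" using insert.prems(4) by auto
  show ?case
  proof (cases "v \<in> T")
    case True
    have b1: "b \<squnion> - v \<in> B T" using insert.prems(2) True by (auto intro: ba_generated.intros)
    have b0: "b \<squnion> - (- v) \<in> B T" using insert.prems(2) True by (auto intro: ba_generated.intros)
    obtain c1 where c1: "c1 \<in> B (S \<inter> T)" "a1 \<le> c1" "c1 \<le> b \<squnion> - v"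
      using insert.IH[OF h(1) b1 le_sup_compl[OF av1] SX] by blast
    obtain c0 where c0: "c0 \<in> B (S \<inter> T)" "a0 \<le> c0" "c0 \<le> b \<squnion> - (- v)"
      using insert.IH[OF h(2) b0 le_sup_compl[OF av0] SX] by blast
    let ?c = "(v \<sqinter> c1) \<squnion> (- v \<sqinter> c0)"
    have sub: "S \<inter> T \<subseteq> insert v S \<inter> T" by auto
    have vin: "v \<in> B (insert v S \<inter> T)" using True by (auto intro: ba_generated.intros)
    have "?c \<in> B (insert v S \<inter> T)"
      using B_mono[OF sub c1(1)] B_mono[OF sub c0(1)] vin by (auto intro: ba_generated.intros)
    moreover have "a \<le> ?c" unfolding h(3) using c1(2) c0(2) by (intro sup_mono inf_mono order_refl)
    moreover have "?c \<le> b"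
    proof -
      have "v \<sqinter> c1 \<le> v \<sqinter> (b \<squnion> - v)" using c1(3) by (rule inf_mono[OF order_refl])
      also have "\<dots> \<le> b" by (rule inf_sup_compl_le)
      finally have 1: "v \<sqinter> c1 \<le> b" .
      have "- v \<sqinter> c0 \<le> - v \<sqinter> (b \<squnion> - (- v))" using c0(3) by (rule inf_mono[OF order_refl])
      also have "\<dots> \<le> b" by (rule inf_sup_compl_le)
      finally have 0: "- v \<sqinter> c0 \<le> b" .
      show ?thesis using 1 0 by simp
    qed
    ultimately show ?thesis by blast
  next
    case False
    have W: "finite (S \<union> T)" "S \<union> T \<subseteq> X" using insert.hyps T SX by auto
    have G: "finite {v}" "{v} \<subseteq> X" "{v} \<inter> (S \<union> T) = {}" using False insert.hyps insert.prems(4) by auto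
    have z1: "a1 \<sqinter> - b \<in> B (S \<union> T)"
      using B_mono[of S "S \<union> T" a1] B_mono[of T "S \<union> T" b] h(1) insert.prems(2) by (auto intro: ba_generated.intros)
    have z0: "a0 \<sqinter> - b \<in> B (S \<union> T)"
      using B_mono[of S "S \<union> T" a0] B_mono[of T "S \<union> T" b] h(2) insert.prems(2) by (auto intro: ba_generated.intros)
    have m1: "ba_meet (sg (\<lambda>_. True) ` {v}) = v" by (simp only: meet_single) (simp add: sg_def)
    have "(v \<sqinter> a1) \<sqinter> - b = bot" using av1 by (simp add: inf_shunt)
    then have "(a1 \<sqinter> - b) \<sqinter> ba_meet (sg (\<lambda>_. True) ` {v}) = bot"
      unfolding m1 by (simp add: inf_aci)
    then have "a1 \<sqinter> - b = bot" by (rule indep_nonzero[OF ind W z1 G])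
    then have a1b: "a1 \<le> b" by (simp add: inf_shunt)
    have m0: "ba_meet (sg (\<lambda>_. False) ` {v}) = - v" by (simp only: meet_single) (simp add: sg_def)
    have "(- v \<sqinter> a0) \<sqinter> - b = bot" using av0 by (simp add: inf_shunt)
    then have "(a0 \<sqinter> - b) \<sqinter> ba_meet (sg (\<lambda>_. False) ` {v}) = bot"
      unfolding m0 by (simp add: inf_aci)
    then have "a0 \<sqinter> - b = bot" by (rule indep_nonzero[OF ind W z0 G])
    then have a0b: "a0 \<le> b" by (simp add: inf_shunt)
    obtain c1 where c1: "c1 \<in> B (S \<inter> T)" "a1 \<le> c1" "c1 \<le> b"
      using insert.IH[OF h(1) insert.prems(2) a1b SX] by blast
    obtain c0 where c0: "c0 \<in> B (S \<inter> T)" "a0 \<le> c0" "c0 \<le> b"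
      using insert.IH[OF h(2) insert.prems(2) a0b SX] by blast
    have eq: "insert v S \<inter> T = S \<inter> T" using False by auto
    have "c1 \<squnion> c0 \<in> B (insert v S \<inter> T)" unfolding eq using c1(1) c0(1) by (auto intro: ba_generated.intros)
    moreover have "a \<le> c1 \<squnion> c0" unfolding h(3) using c1(2) c0(2)
      by (meson inf.coboundedI2 sup_mono)
    moreover have "c1 \<squnion> c0 \<le> b" using c1(3) c0(3) by simp
    ultimately show ?thesis by blast
  qed
qed

lemma interp:
  assumes ind: "ba_independent X" and S: "finite S" "S \<subseteq> X" and T: "T \<subseteq> X"
    and a: "a \<in> B S" and b: "b \<in> B T" and ab: "a \<le> b"
  shows "\<exists>c \<in> B (S \<inter> T). a \<le> c \<and> c \<le> b"
proof -
  obtain F where F: "finite F" "F \<subseteq> T" "b \<in> B F" using B_finitary[OF b] by blast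
  obtain c where "c \<in> B (S \<inter> F)" "a \<le> c" "c \<le> b"
    using interp_fin[OF ind S F(1) _ a F(3) ab] F(2) T by blast
  moreover have "S \<inter> F \<subseteq> S \<inter> T" using F(2) by auto
  ultimately show ?thesis using B_mono by blast
qed

lemma countable_almost:
  assumes "countable (Q::'b::order set)"
  shows "almost_omega_op_like Q"
proof -
  let ?i = "to_nat_on Q"
  have inj: "inj_on ?i Q" using assms by (rule inj_on_to_nat_on)
  define D where "D = {p\<in>Q. \<not>(\<exists>q\<in>Q. q < p \<and> ?i q < ?i p)}"
  have dense: "dense_in D Q"
    unfolding dense_in_def
  proof (intro conjI ballI)
    show "D \<subseteq> Q" unfolding D_def by auto
    fix p assume p: "p \<in> Q"
    define n where "n = (LEAST n. \<exists>q\<in>Q. q \<le> p \<and> ?i q = n)"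
    have ex: "\<exists>n. \<exists>q\<in>Q. q \<le> p \<and> ?i q = n" using p by blast
    obtain q where q: "q \<in> Q" "q \<le> p" "?i q = n"
      using LeastI_ex[OF ex] unfolding n_def by blast
    have "q \<in> D"
    proof -
      have "\<not>(\<exists>q'\<in>Q. q' < q \<and> ?i q' < ?i q)"
      proof
        assume "\<exists>q'\<in>Q. q' < q \<and> ?i q' < ?i q"
        then obtain q' where q': "q' \<in> Q" "q' < q" "?i q' < ?i q" by blast
        then have "q' \<le> p" using q(2) by simp
        then have "n \<le> ?i q'" unfolding n_def using q'(1) by (intro Least_le) blast
        then show False using q'(3) q(3) by simp
      qed
      then show ?thesis unfolding D_def using q(1) by blast
    qed
    then show "\<exists>d\<in>D. d \<le> p" using q(2) by blast
  qed
  have "omega_op_like D"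
    unfolding omega_op_like_def
  proof
    fix p assume p: "p \<in> D"
    have sub: "{d \<in> D. p \<le> d} \<subseteq> {x \<in> Q. ?i x \<le> ?i p}"
    proof
      fix d assume d: "d \<in> {d \<in> D. p \<le> d}"
      have dQ: "d \<in> Q" "p \<in> Q" using d p unfolding D_def by auto
      show "d \<in> {x \<in> Q. ?i x \<le> ?i p}"
      proof (cases "d = p")
        case False
        then have "p < d" using d by auto
        then have "\<not> ?i p < ?i d" using d dQ unfolding D_def by blast
        then show ?thesis using dQ by simp
      qed (use dQ in simp)
    qed
    have "finite {x \<in> Q. ?i x \<le> ?i p}"
      by (rule inj_on_finite[of ?i _ "{..?i p}"]) (use inj in \<open>auto intro: inj_on_subset\<close>)
    then show "finite {d \<in> D. p \<le> d}" using sub finite_subset by blast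
  qed
  then show ?thesis using dense unfolding almost_omega_op_like_def by blast
qed

lemma wo_fin_under:
  assumes wo: "wo_rel r" and "finite F" "F \<subseteq> Field r" "Field r \<noteq> {}"
  shows "\<exists>a\<in>Field r. F \<subseteq> under r a"
  using assms(2,3)
proof (induction F rule: finite_induct)
  case empty then show ?case using assms(4) by auto
next
  case (insert x F)
  then obtain a where a: "a \<in> Field r" "F \<subseteq> under r a" by auto
  have x: "x \<in> Field r" using insert.prems by auto
  show ?case
  proof (cases "(x, a) \<in> r")
    case True
    then show ?thesis using a by (auto simp: under_def)
  next
    case False
    then have xa: "(a, x) \<in> r" using wo_rel.TOTALS[OF wo] a(1) x by blast
    have "F \<subseteq> under r x" using a(2) xa wo_rel.TRANS[OF wo] unfolding under_def trans_def by blast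
    moreover have "x \<in> under r x" using x wo_rel.REFL[OF wo] unfolding under_def refl_on_def by auto
    ultimately show ?thesis using x by auto
  qed
qed

lemma wo_fin_max:
  assumes wo: "wo_rel r" and "finite A" "A \<noteq> {}" "A \<subseteq> Field r"
  shows "\<exists>m\<in>A. \<forall>x\<in>A. (x, m) \<in> r"
  using assms(2,3,4)
proof (induction A rule: finite_ne_induct)
  case (singleton x)
  then show ?case using wo_rel.REFL[OF wo] unfolding refl_on_def by auto
next
  case (insert x F)
  then obtain m where m: "m \<in> F" "\<forall>y\<in>F. (y, m) \<in> r" by auto
  have x: "x \<in> Field r" "m \<in> Field r" using insert.prems m by auto
  show ?case
  proof (cases "(x, m) \<in> r")
    case True then show ?thesis using m by auto
  next
    case False
    then have xa: "(m, x) \<in> r" using wo_rel.TOTALS[OF wo] x by blast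
    have "\<forall>y\<in>F. (y, x) \<in> r" using m(2) xa wo_rel.TRANS[OF wo] unfolding trans_def by blast
    moreover have "(x, x) \<in> r" using x wo_rel.REFL[OF wo] unfolding refl_on_def by auto
    ultimately show ?thesis by auto
  qed
qed

lemma Inf_fin_in_B:
  "finite A \<Longrightarrow> A \<noteq> {} \<Longrightarrow> A \<subseteq> B H \<Longrightarrow> Inf_fin A \<in> B H"
proof (induction A rule: finite_ne_induct)
  case (singleton x) then show ?case by simp
next
  case (insert x F) then show ?case by (auto intro: ba_generated.intros)
qed

lemma layered:
  fixes Q :: "'a::boolean_algebra set" and r :: "'a rel" and Ya :: "'a \<Rightarrow> 'a set"
  assumes ind: "ba_independent X"
    and QX: "Q \<subseteq> B X"
    and wo: "wo_rel r"
    and YaX: "\<And>a. a \<in> Field r \<Longrightarrow> Ya a \<subseteq> X"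
    and mono: "\<And>a b. (a, b) \<in> r \<Longrightarrow> Ya a \<subseteq> Ya b"
    and closed: "\<And>a c q. a \<in> Field r \<Longrightarrow> c \<in> B (Ya a) \<Longrightarrow> q \<in> Q \<Longrightarrow> q \<le> c \<Longrightarrow> \<exists>q'\<in>Q. q' \<in> B (Ya a) \<and> q' \<le> c"
    and cover: "\<And>p. p \<in> Q \<Longrightarrow> \<exists>a\<in>Field r. p \<in> B (Ya a)"
    and IH: "\<And>a Q'. a \<in> Field r \<Longrightarrow> Q' \<subseteq> Q \<Longrightarrow> Q' \<subseteq> B (Ya a) \<Longrightarrow> almost_omega_op_like Q'"
  shows "almost_omega_op_like Q"
proof -
  have trans: "(a, b) \<in> r \<Longrightarrow> (b, c) \<in> r \<Longrightarrow> (a, c) \<in> r" for a b c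
    using wo_rel.TRANS[OF wo] unfolding trans_def by blast
  have antisym: "(a, b) \<in> r \<Longrightarrow> (b, a) \<in> r \<Longrightarrow> a = b" for a b
    using wo_rel.ANTISYM[OF wo] unfolding antisym_def by blast
  have refl: "a \<in> Field r \<Longrightarrow> (a, a) \<in> r" for a
    using wo_rel.REFL[OF wo] unfolding refl_on_def by blast
  define rk where "rk p = wo_rel.minim r {a \<in> Field r. p \<in> B (Ya a)}" for p
  have rk: "rk p \<in> Field r \<and> p \<in> B (Ya (rk p))" if "p \<in> Q" for p
  proof -
    have "{a \<in> Field r. p \<in> B (Ya a)} \<noteq> {}" using cover[OF that] by blast
    then have "rk p \<in> {a \<in> Field r. p \<in> B (Ya a)}"
      unfolding rk_def by (intro wo_rel.minim_in[OF wo]) auto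
    then show ?thesis by simp
  qed
  have rk_le: "(rk p, a) \<in> r" if "a \<in> Field r" "p \<in> B (Ya a)" for p a
    unfolding rk_def by (rule wo_rel.minim_least[OF wo]) (use that in auto)
  define L where "L a = {p\<in>Q. rk p = a \<and> \<not>(\<exists>q\<in>Q. (rk q, a) \<in> r \<and> rk q \<noteq> a \<and> q \<le> p)}" for a
  define Dl where "Dl a = (SOME D. dense_in D (L a) \<and> omega_op_like D)" for a
  have Dl: "dense_in (Dl a) (L a) \<and> omega_op_like (Dl a)" if "a \<in> Field r" for a
  proof -
    have "L a \<subseteq> B (Ya a)" unfolding L_def using rk by auto
    then have "almost_omega_op_like (L a)" by (intro IH[OF that]) (auto simp: L_def)
    then have "\<exists>D. dense_in D (L a) \<and> omega_op_like D" unfolding almost_omega_op_like_def .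
    then show ?thesis unfolding Dl_def by (rule someI_ex)
  qed
  define D where "D = (\<Union>a\<in>Field r. Dl a)"
  have DL: "d \<in> L (rk d) \<and> d \<in> Dl (rk d)" if dD: "d \<in> D" for d
  proof -
    obtain a where a: "a \<in> Field r" "d \<in> Dl a" using dD unfolding D_def by blast
    then have "d \<in> L a" using Dl[OF a(1)] unfolding dense_in_def by blast
    then have "rk d = a" unfolding L_def by blast
    then show ?thesis using a \<open>d \<in> L a\<close> by simp
  qed
  have DQ: "d \<in> D \<Longrightarrow> d \<in> Q" for d using DL unfolding L_def by blast
  have dens: "\<forall>p\<in>Q. rk p = a \<longrightarrow> (\<exists>d\<in>D. d \<le> p \<and> (rk d, rk p) \<in> r)" for a
  proof (induction a rule: wf_induct_rule[OF wo_rel.WF[OF wo]])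
    case (1 a)
    show ?case
    proof (intro ballI impI)
      fix p assume p: "p \<in> Q" "rk p = a"
      show "\<exists>d\<in>D. d \<le> p \<and> (rk d, rk p) \<in> r"
      proof (cases "\<exists>q\<in>Q. (rk q, a) \<in> r \<and> rk q \<noteq> a \<and> q \<le> p")
        case True
        then obtain q where q: "q \<in> Q" "(rk q, a) \<in> r" "rk q \<noteq> a" "q \<le> p" by blast
        then obtain d where d: "d \<in> D" "d \<le> q" "(rk d, rk q) \<in> r" using 1[of "rk q"] by blast
        then show ?thesis using q p trans[OF d(3) q(2)] by (auto intro: order_trans)
      next
        case False
        then have pL: "p \<in> L a" unfolding L_def using p by blast
        have a: "a \<in> Field r" using rk[OF p(1)] p(2) by simp
        obtain d where d: "d \<in> Dl a" "d \<le> p" using Dl[OF a] pL unfolding dense_in_def by blast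
        have "d \<in> D" using d a unfolding D_def by blast
        moreover have "rk d = a" using DL[OF \<open>d \<in> D\<close>] d(1) Dl[OF a] unfolding dense_in_def L_def by blast
        ultimately show ?thesis using d(2) p(2) refl[OF a] by auto
      qed
    qed
  qed
  have dense: "dense_in D Q" unfolding dense_in_def using DQ dens by blast
  have fin: "\<forall>d\<in>D. rk d = a \<longrightarrow> finite {d'\<in>D. d \<le> d'}" for a
  proof (induction a rule: wf_induct_rule[OF wo_rel.WF[OF wo]])
    case (1 a)
    show ?case
    proof (intro ballI impI)
      fix d assume d: "d \<in> D" "rk d = a"
      have dQ: "d \<in> Q" using DQ[OF d(1)] .
      have a: "a \<in> Field r" using rk[OF dQ] d(2) by simp
      have dDl: "d \<in> Dl a" using DL[OF d(1)] d(2) by simp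
      define U where "U = {d'\<in>D. d \<le> d' \<and> (rk d', a) \<in> r \<and> rk d' \<noteq> a}"
      have split: "{d'\<in>D. d \<le> d'} \<subseteq> {d'\<in>Dl a. d \<le> d'} \<union> U"
      proof
        fix d' assume d': "d' \<in> {d'\<in>D. d \<le> d'}"
        then have d'D: "d' \<in> D" "d \<le> d'" by auto
        have b: "rk d' \<in> Field r" using rk[OF DQ[OF d'D(1)]] by simp
        show "d' \<in> {d'\<in>Dl a. d \<le> d'} \<union> U"
        proof (cases "rk d' = a")
          case True then show ?thesis using DL[OF d'D(1)] d'D(2) by auto
        next
          case False
          show ?thesis
          proof (cases "(rk d', a) \<in> r")
            case True then show ?thesis using False d'D unfolding U_def by auto
          next
            case nr: False
            then have ab: "(a, rk d') \<in> r" using wo_rel.TOTALS[OF wo] a b by blast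
            have "d' \<in> L (rk d')" using DL[OF d'D(1)] by simp
            then have "\<not>(\<exists>q\<in>Q. (rk q, rk d') \<in> r \<and> rk q \<noteq> rk d' \<and> q \<le> d')" unfolding L_def by blast
            moreover have "(rk d, rk d') \<in> r \<and> rk d \<noteq> rk d' \<and> d \<le> d'" using ab False d(2) d'D(2) by auto
            ultimately show ?thesis using dQ by blast
          qed
        qed
      qed
      have f1: "finite {d'\<in>Dl a. d \<le> d'}" using Dl[OF a] dDl unfolding omega_op_like_def by blast
      have f2: "finite U"
      proof (cases "U = {}")
        case False
        then obtain d0 where d0: "d0 \<in> U" by blast
        have dBX: "d \<in> B X" using QX dQ by blast
        obtain F where F: "finite F" "F \<subseteq> X" "d \<in> B F" using B_finitary[OF dBX] by blast
        have intp: "\<exists>c \<in> B (F \<inter> Ya (rk d')). d \<le> c \<and> c \<le> d'" if "d' \<in> U" for d'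
        proof -
          have d': "d' \<in> Q" "d \<le> d'" using that DQ unfolding U_def by auto
          show ?thesis by (rule interp[OF ind F(1,2) YaX F(3) _ d'(2)]) (use rk[OF d'(1)] in auto)
        qed
        define H where "H = F \<inter> (\<Union>d'\<in>U. Ya (rk d'))"
        have fH: "finite H" using F(1) unfolding H_def by simp
        define dv where "dv v = (SOME d'. d' \<in> U \<and> v \<in> Ya (rk d'))" for v
        have dv: "dv v \<in> U \<and> v \<in> Ya (rk (dv v))" if "v \<in> H" for v
        proof -
          have "\<exists>d'. d' \<in> U \<and> v \<in> Ya (rk d')" using that unfolding H_def by blast
          then show ?thesis unfolding dv_def by (rule someI_ex)
        qed
        define R where "R = rk ` (insert d0 (dv ` H))"
        have RU: "insert d0 (dv ` H) \<subseteq> U" using d0 dv by auto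
        have "R \<subseteq> Field r" unfolding R_def using RU rk DQ unfolding U_def by blast
        moreover have "finite R" "R \<noteq> {}" unfolding R_def using fH by auto
        ultimately obtain m where m: "m \<in> R" "\<forall>x\<in>R. (x, m) \<in> r" using wo_fin_max[OF wo] by blast
        have ma: "(m, a) \<in> r" "m \<noteq> a" "m \<in> Field r" using m(1) RU \<open>R \<subseteq> Field r\<close> unfolding R_def U_def by auto
        have HY: "H \<subseteq> Ya m"
        proof
          fix v assume v: "v \<in> H"
          have "rk (dv v) \<in> R" unfolding R_def using v by blast
          then show "v \<in> Ya m" using mono m(2) dv[OF v] by blast
        qed
        define A where "A = {c \<in> B H. d \<le> c}"
        have fA: "finite A" unfolding A_def using B_finite[OF fH] by simp
        have topA: "top \<in> A" unfolding A_def by (auto intro: ba_generated.intros)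
        define c0 where "c0 = Inf_fin A"
        have c0B: "c0 \<in> B H" unfolding c0_def by (rule Inf_fin_in_B[OF fA]) (use topA in \<open>auto simp: A_def\<close>)
        have dc0: "d \<le> c0" unfolding c0_def by (rule Inf_fin.boundedI[OF fA]) (use topA in \<open>auto simp: A_def\<close>)
        have c0U: "c0 \<le> d'" if "d' \<in> U" for d'
        proof -
          note dU = that
          obtain c where c: "c \<in> B (F \<inter> Ya (rk d'))" "d \<le> c" "c \<le> d'" using intp[OF dU] by blast
          have "F \<inter> Ya (rk d') \<subseteq> H" unfolding H_def using dU by blast
          then have "c \<in> A" unfolding A_def using B_mono c by blast
          then have "c0 \<le> c" unfolding c0_def by (rule Inf_fin.coboundedI[OF fA])
          then show ?thesis using c(3) by simp
        qed
        have "c0 \<in> B (Ya m)" using B_mono[OF HY c0B] .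
        then obtain q' where q': "q' \<in> Q" "q' \<in> B (Ya m)" "q' \<le> c0" using closed[OF ma(3) _ dQ dc0] by blast
        have "(rk q', m) \<in> r" using rk_le[OF ma(3) q'(2)] .
        obtain d'' where d'': "d'' \<in> D" "d'' \<le> q'" "(rk d'', rk q') \<in> r" using dens q'(1) by blast
        have "(rk d'', m) \<in> r" using trans[OF d''(3) \<open>(rk q', m) \<in> r\<close>] .
        then have r1: "(rk d'', a) \<in> r" using trans ma(1) by blast
        have r2: "rk d'' \<noteq> a" using antisym[OF _ ma(1)] \<open>(rk d'', m) \<in> r\<close> ma(2) by auto
        have "finite {x\<in>D. d'' \<le> x}" using 1[of "rk d''"] r1 r2 d''(1) by blast
        moreover have "U \<subseteq> {x\<in>D. d'' \<le> x}"
        proof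
          fix d' assume "d' \<in> U"
          then have "d'' \<le> d'" using d''(2) q'(3) c0U by (blast intro: order_trans)
          then show "d' \<in> {x\<in>D. d'' \<le> x}" using \<open>d' \<in> U\<close> unfolding U_def by blast
        qed
        ultimately show ?thesis using finite_subset by blast
      qed simp
      show "finite {d'\<in>D. d \<le> d'}" using split f1 f2 finite_subset by blast
    qed
  qed
  have "omega_op_like D" unfolding omega_op_like_def using fin by blast
  then show ?thesis using dense unfolding almost_omega_op_like_def by blast
qed

lemma B_countable: "countable Y \<Longrightarrow> countable (B (Y::'a::boolean_algebra set))"
proof -
  assume Y: "countable Y"
  have "B Y \<subseteq> (\<Union>F\<in>Fpow Y. B F)" using B_finitary unfolding Fpow_def by blast
  moreover have "countable (\<Union>F\<in>Fpow Y. B F)"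
    by (rule countable_UN[OF countable_Fpow[OF Y]]) (auto simp: Fpow_def intro: countable_finite B_finite)
  ultimately show ?thesis by (rule countable_subset)
qed

lemma fin_le_inf: "finite A \<Longrightarrow> infinite Z \<Longrightarrow> |A| \<le>o |Z|"
  by (rule ordLess_imp_ordLeq, rule finite_ordLess_infinite[OF card_of_Well_order card_of_Well_order])
     (simp_all add: Field_card_of)

lemma Un_le_inf: "infinite Z \<Longrightarrow> |A| \<le>o |Z| \<Longrightarrow> |C| \<le>o |Z| \<Longrightarrow> |A \<union> C| \<le>o |Z|"
  by (rule card_of_Un_ordLeq_infinite_Field[of "|Z|"]) (simp_all add: Field_card_of card_of_Card_order card_of_card_order_on)

lemma Times_le_inf: "infinite Z \<Longrightarrow> |A| \<le>o |Z| \<Longrightarrow> |C| \<le>o |Z| \<Longrightarrow> |A \<times> C| \<le>o |Z|"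
  by (rule card_of_Times_ordLeq_infinite_Field[of "|Z|"]) (simp_all add: Field_card_of card_of_Card_order card_of_card_order_on)

lemma funpow_inc:
  assumes "\<And>W. W \<subseteq> f W"
  shows "m \<le> n \<Longrightarrow> (f ^^ m) Z \<subseteq> (f ^^ n) Z"
proof (induction n)
  case 0 then show ?case by simp
next
  case (Suc n)
  show ?case
  proof (cases "m = Suc n")
    case False
    then have "(f ^^ m) Z \<subseteq> (f ^^ n) Z" using Suc by simp
    then show ?thesis using assms[of "(f ^^ n) Z"] by simp
  qed simp
qed

definition gstep :: "'a::boolean_algebra set \<Rightarrow> 'a set" where
  "gstep W = W \<union> uminus ` W \<union> (\<lambda>p. fst p \<sqinter> snd p) ` (W \<times> W) \<union> (\<lambda>p. fst p \<squnion> snd p) ` (W \<times> W)"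

lemma gstep_inc: "W \<subseteq> gstep W" unfolding gstep_def by blast

lemma B_in_G: "x \<in> B Z \<Longrightarrow> \<exists>n. x \<in> (gstep ^^ n) (Z \<union> {bot, top})"
proof (induction x rule: ba_generated.induct)
  case (gen_base x)
  then have "x \<in> (gstep ^^ 0) (Z \<union> {bot, top})" by simp
  then show ?case by blast
next
  case gen_bot
  have "bot \<in> (gstep ^^ 0) (Z \<union> {bot, top})" by simp
  then show ?case by blast
next
  case gen_top
  have "top \<in> (gstep ^^ 0) (Z \<union> {bot, top})" by simp
  then show ?case by blast
next
  case (gen_compl x)
  then obtain n where "x \<in> (gstep ^^ n) (Z \<union> {bot, top})" by blast
  then have "- x \<in> gstep ((gstep ^^ n) (Z \<union> {bot, top}))" unfolding gstep_def by blast
  then have "- x \<in> (gstep ^^ Suc n) (Z \<union> {bot, top})" by simp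
  then show ?case by blast
next
  case (gen_inf x y)
  then obtain n m where nm: "x \<in> (gstep ^^ n) (Z \<union> {bot, top})" "y \<in> (gstep ^^ m) (Z \<union> {bot, top})" by blast
  have s1: "(gstep ^^ n) (Z \<union> {bot, top}) \<subseteq> (gstep ^^ max n m) (Z \<union> {bot, top})"
    by (rule funpow_inc[OF gstep_inc]) (rule max.cobounded1)
  have s2: "(gstep ^^ m) (Z \<union> {bot, top}) \<subseteq> (gstep ^^ max n m) (Z \<union> {bot, top})"
    by (rule funpow_inc[OF gstep_inc]) (rule max.cobounded2)
  have "(x, y) \<in> (gstep ^^ max n m) (Z \<union> {bot, top}) \<times> (gstep ^^ max n m) (Z \<union> {bot, top})"
    using nm s1 s2 by blast
  then have "x \<sqinter> y \<in> gstep ((gstep ^^ max n m) (Z \<union> {bot, top}))" unfolding gstep_def by force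
  then have "x \<sqinter> y \<in> (gstep ^^ Suc (max n m)) (Z \<union> {bot, top})" by simp
  then show ?case by blast
next
  case (gen_sup x y)
  then obtain n m where nm: "x \<in> (gstep ^^ n) (Z \<union> {bot, top})" "y \<in> (gstep ^^ m) (Z \<union> {bot, top})" by blast
  have s1: "(gstep ^^ n) (Z \<union> {bot, top}) \<subseteq> (gstep ^^ max n m) (Z \<union> {bot, top})"
    by (rule funpow_inc[OF gstep_inc]) (rule max.cobounded1)
  have s2: "(gstep ^^ m) (Z \<union> {bot, top}) \<subseteq> (gstep ^^ max n m) (Z \<union> {bot, top})"
    by (rule funpow_inc[OF gstep_inc]) (rule max.cobounded2)
  have "(x, y) \<in> (gstep ^^ max n m) (Z \<union> {bot, top}) \<times> (gstep ^^ max n m) (Z \<union> {bot, top})"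
    using nm s1 s2 by blast
  then have "x \<squnion> y \<in> gstep ((gstep ^^ max n m) (Z \<union> {bot, top}))" unfolding gstep_def by force
  then have "x \<squnion> y \<in> (gstep ^^ Suc (max n m)) (Z \<union> {bot, top})" by simp
  then show ?case by blast
qed

lemma B_card: "infinite Z \<Longrightarrow> |B (Z::'a::boolean_algebra set)| \<le>o |Z|"
proof -
  assume Z: "infinite Z"
  have it: "|(gstep ^^ n) (Z \<union> {bot, top})| \<le>o |Z|" for n
  proof (induction n)
    case 0
    have zz: "|Z| \<le>o |Z|" by (simp add: ordLeq_refl card_of_Card_order)
    have "|Z \<union> {bot, top}| \<le>o |Z|" by (rule Un_le_inf[OF Z zz fin_le_inf[OF _ Z]]) simp
    then show ?case by simp
  next
    case (Suc n)
    let ?W = "(gstep ^^ n) (Z \<union> {bot, top})"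
    have a: "|uminus ` ?W| \<le>o |Z|" using ordLeq_transitive[OF card_of_image Suc.IH] .
    have t: "|?W \<times> ?W| \<le>o |Z|" by (rule Times_le_inf[OF Z Suc.IH Suc.IH])
    have b: "|(\<lambda>p. fst p \<sqinter> snd p) ` (?W \<times> ?W)| \<le>o |Z|" using ordLeq_transitive[OF card_of_image t] .
    have c: "|(\<lambda>p. fst p \<squnion> snd p) ` (?W \<times> ?W)| \<le>o |Z|" using ordLeq_transitive[OF card_of_image t] .
    have "|gstep ?W| \<le>o |Z|" unfolding gstep_def[of ?W]
      by (intro Un_le_inf[OF Z] Suc.IH a b c)
    then show ?case by simp
  qed
  have "B Z \<subseteq> (\<Union>n. (gstep ^^ n) (Z \<union> {bot, top}))" using B_in_G by blast
  then have "|B Z| \<le>o |\<Union>n. (gstep ^^ n) (Z \<union> {bot, top})|" by (rule card_of_mono1)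
  moreover have "|\<Union>n. (gstep ^^ n) (Z \<union> {bot, top})| \<le>o |Z|"
  proof (rule card_of_UNION_ordLeq_infinite[OF Z])
    show "|UNIV::nat set| \<le>o |Z|" using infinite_iff_card_of_nat[THEN iffD1, OF Z] .
    show "\<forall>n\<in>UNIV. |(gstep ^^ n) (Z \<union> {bot, top})| \<le>o |Z|" using it by simp
  qed
  ultimately show ?thesis using ordLeq_transitive by blast
qed

definition clstep :: "('a::boolean_algebra \<Rightarrow> 'a set) \<Rightarrow> ('a \<Rightarrow> bool) \<Rightarrow> 'a set \<Rightarrow> 'a set" where
  "clstep g P Z = Z \<union> (\<Union>c\<in>{c. c \<in> B Z \<and> P c}. g c)"

definition cl :: "('a::boolean_algebra \<Rightarrow> 'a set) \<Rightarrow> ('a \<Rightarrow> bool) \<Rightarrow> 'a set \<Rightarrow> 'a set" where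
  "cl g P Z = (\<Union>n. (clstep g P ^^ n) Z)"

lemma clstep_inc: "Z \<subseteq> clstep g P Z" unfolding clstep_def by blast

lemma clstep_mono: "Z \<subseteq> Z' \<Longrightarrow> clstep g P Z \<subseteq> clstep g P Z'"
  unfolding clstep_def using B_mono by blast

lemma iter_inc: "m \<le> n \<Longrightarrow> (clstep g P ^^ m) Z \<subseteq> (clstep g P ^^ n) Z"
proof (induction n)
  case 0 then show ?case by simp
next
  case (Suc n)
  show ?case
  proof (cases "m = Suc n")
    case False
    then have "(clstep g P ^^ m) Z \<subseteq> (clstep g P ^^ n) Z" using Suc by simp
    then show ?thesis using clstep_inc[of "(clstep g P ^^ n) Z" g P] by simp
  qed simp
qed

lemma iter_mono: "Z \<subseteq> Z' \<Longrightarrow> (clstep g P ^^ n) Z \<subseteq> (clstep g P ^^ n) Z'"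
  by (induction n) (auto dest: clstep_mono[of _ _ g P])

lemma cl_sub: "Z \<subseteq> cl g P Z"
proof -
  have "(clstep g P ^^ 0) Z \<subseteq> (\<Union>n. (clstep g P ^^ n) Z)" by (rule UN_upper) simp
  then show ?thesis unfolding cl_def by simp
qed

lemma cl_mono: "Z \<subseteq> Z' \<Longrightarrow> cl g P Z \<subseteq> cl g P Z'"
  unfolding cl_def by (intro UN_mono order_refl iter_mono)

lemma finite_in_chain:
  assumes "finite F" "F \<subseteq> (\<Union>n. A n)" "\<And>m n. m \<le> n \<Longrightarrow> A m \<subseteq> (A (n::nat) :: 'x set)"
  shows "\<exists>n. F \<subseteq> A n"
  using assms(1,2)
proof (induction F rule: finite_induct)
  case empty then show ?case by blast
next
  case (insert x F)
  then obtain n where n: "F \<subseteq> A n" by blast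
  obtain k where k: "x \<in> A k" using insert.prems by blast
  have s1: "A n \<subseteq> A (max n k)" by (rule assms(3)) (rule max.cobounded1)
  have s2: "A k \<subseteq> A (max n k)" by (rule assms(3)) (rule max.cobounded2)
  have "F \<subseteq> A (max n k)" "x \<in> A (max n k)" using n k s1 s2 by auto
  then show ?case by blast
qed

lemma cl_closed:
  assumes "c \<in> B (cl g P Z)" "P c"
  shows "g c \<subseteq> cl g P Z"
proof -
  obtain F where F: "finite F" "F \<subseteq> cl g P Z" "c \<in> B F" using B_finitary[OF assms(1)] by blast
  obtain n where n: "F \<subseteq> (clstep g P ^^ n) Z"
    using finite_in_chain[OF F(1) F(2)[unfolded cl_def] iter_inc] by blast
  have "c \<in> B ((clstep g P ^^ n) Z)" using B_mono[OF n F(3)] .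
  then have "g c \<subseteq> (clstep g P ^^ Suc n) Z" using assms(2) unfolding clstep_def by auto
  then show ?thesis unfolding cl_def by blast
qed

lemma cl_subset:
  assumes "Z \<subseteq> Y" "\<And>c. P c \<Longrightarrow> g c \<subseteq> Y"
  shows "cl g P Z \<subseteq> Y"
proof -
  have "(clstep g P ^^ n) Z \<subseteq> Y" for n
    by (induction n) (use assms in \<open>auto simp: clstep_def\<close>)
  then show ?thesis unfolding cl_def by blast
qed

lemma cl_card:
  assumes Z: "infinite Z" and g: "\<And>c. finite (g c)"
  shows "|cl g P Z| \<le>o |Z|"
proof -
  have it: "|(clstep g P ^^ n) Z| \<le>o |Z|" for n
  proof (induction n)
    case 0 then show ?case by (simp add: ordLeq_refl card_of_Card_order)
  next
    case (Suc n)
    let ?W = "(clstep g P ^^ n) Z"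
    have "Z \<subseteq> ?W" using iter_inc[of 0 n g P Z] by simp
    then have infW: "infinite ?W" using Z by (rule infinite_super)
    have BW: "|B ?W| \<le>o |Z|" using ordLeq_transitive[OF B_card[OF infW] Suc.IH] .
    have "|\<Union>c\<in>{c. c \<in> B ?W \<and> P c}. g c| \<le>o |Z|"
    proof (rule card_of_UNION_ordLeq_infinite[OF Z])
      have "{c. c \<in> B ?W \<and> P c} \<subseteq> B ?W" by blast
      then show "|{c. c \<in> B ?W \<and> P c}| \<le>o |Z|"
        using ordLeq_transitive[OF card_of_mono1 BW] by simp
      show "\<forall>c\<in>{c. c \<in> B ?W \<and> P c}. |g c| \<le>o |Z|"
      proof
        fix c show "|g c| \<le>o |Z|" by (rule fin_le_inf[OF g Z])
      qed
    qed
    then have "|?W \<union> (\<Union>c\<in>{c. c \<in> B ?W \<and> P c}. g c)| \<le>o |Z|"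
      by (rule Un_le_inf[OF Z Suc.IH])
    moreover have "(clstep g P ^^ Suc n) Z = ?W \<union> (\<Union>c\<in>{c. c \<in> B ?W \<and> P c}. g c)"
      by (simp only: funpow.simps(2) o_apply clstep_def[of g P ?W])
    ultimately show ?case by simp
  qed
  show ?thesis unfolding cl_def
  proof (rule card_of_UNION_ordLeq_infinite[OF Z])
    show "|UNIV::nat set| \<le>o |Z|" using infinite_iff_card_of_nat[THEN iffD1, OF Z] .
    show "\<forall>n\<in>UNIV. |(clstep g P ^^ n) Z| \<le>o |Z|" using it by simp
  qed
qed

lemma countable_card_nat: "countable A \<longleftrightarrow> |A| \<le>o |UNIV::nat set|"
  unfolding countable_def card_of_ordLeq[symmetric] by auto

lemma main_ind:
  assumes ind: "ba_independent X"
  shows "Y \<subseteq> X \<Longrightarrow> Q \<subseteq> B Y \<Longrightarrow> almost_omega_op_like (Q::'a::boolean_algebra set)"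
proof (induction Y arbitrary: Q rule: wf_induct_rule[OF wf_inv_image[OF wf_ordLess, of card_of]])
  case (1 Y)
  show ?case
  proof (cases "countable Y")
    case True
    then have "countable Q" using B_countable[OF True] 1(3) countable_subset by blast
    then show ?thesis by (rule countable_almost)
  next
    case False
    let ?r = "|Y|"
    have wo: "wo_rel ?r" by (simp add: wo_rel_def card_of_Well_order)
    have Fr: "Field ?r = Y" by (rule Field_card_of)
    have CO: "Card_order ?r" by (rule card_of_Card_order)
    have infY: "infinite Y" using False countable_finite by blast
    obtain N0 where N0: "N0 \<subseteq> Y" "countable N0" "infinite N0"
      using infinite_countable_subset'[OF infY] by blast
    have natY: "|UNIV::nat set| <o |Y|"
    proof -
      have "\<not> |Y| \<le>o |UNIV::nat set|" using False countable_card_nat by blast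
      then show ?thesis using not_ordLeq_iff_ordLess[OF card_of_Well_order card_of_Well_order] by blast
    qed
    have QY: "Q \<subseteq> B Y" using 1(3) .
    define P where "P c = (\<exists>q\<in>Q. q \<le> c)" for c
    define wit where "wit c = (SOME q. q \<in> Q \<and> q \<le> c)" for c
    define fin where "fin q = (SOME F. finite F \<and> F \<subseteq> Y \<and> q \<in> B F)" for q
    define g where "g c = (if P c then fin (wit c) else {})" for c
    have witP: "wit c \<in> Q \<and> wit c \<le> c" if "P c" for c
      unfolding wit_def by (rule someI_ex) (use that in \<open>auto simp: P_def\<close>)
    have finQ: "finite (fin q) \<and> fin q \<subseteq> Y \<and> q \<in> B (fin q)" if "q \<in> Q" for q
    proof -
      have "q \<in> B Y" using that QY by blast
      then have "\<exists>F. finite F \<and> F \<subseteq> Y \<and> q \<in> B F" by (rule B_finitary)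
      then show ?thesis unfolding fin_def by (rule someI_ex)
    qed
    have gfin: "finite (g c)" for c unfolding g_def using finQ witP by auto
    have gY: "g c \<subseteq> Y" for c unfolding g_def using finQ witP by auto
    define Ya where "Ya a = cl g P (under ?r a \<union> N0)" for a
    have YaY: "Ya a \<subseteq> Y" for a
      unfolding Ya_def by (rule cl_subset) (use N0(1) under_Field[of ?r a] Fr gY in auto)
    have YX: "Y \<subseteq> X" using 1(2) .
    show ?thesis
    proof (rule layered[OF ind _ wo, of Q Ya])
      show "Q \<subseteq> B X" using QY B_mono[OF YX] by blast
      show "\<And>a. a \<in> Field ?r \<Longrightarrow> Ya a \<subseteq> X" using YaY YX by blast
      show "\<And>a b. (a, b) \<in> ?r \<Longrightarrow> Ya a \<subseteq> Ya b"
      proof -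
        fix a b assume ab: "(a, b) \<in> ?r"
        have "under ?r a \<subseteq> under ?r b"
          using ab wo_rel.TRANS[OF wo] unfolding under_def trans_def by blast
        then show "Ya a \<subseteq> Ya b" unfolding Ya_def by (intro cl_mono) blast
      qed
      show "\<exists>q'\<in>Q. q' \<in> B (Ya a) \<and> q' \<le> c"
        if "a \<in> Field ?r" "c \<in> B (Ya a)" "q \<in> Q" "q \<le> c" for a c q
      proof -
        have Pc: "P c" unfolding P_def using that(3,4) by blast
        have "g c \<subseteq> Ya a" unfolding Ya_def by (rule cl_closed) (use that(2) Pc in \<open>simp_all add: Ya_def\<close>)
        then have "fin (wit c) \<subseteq> Ya a" using Pc unfolding g_def by simp
        moreover have "wit c \<in> B (fin (wit c))" using finQ witP[OF Pc] by blast
        ultimately have "wit c \<in> B (Ya a)" using B_mono by blast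
        then show ?thesis using witP[OF Pc] by blast
      qed
      show "\<exists>a\<in>Field ?r. p \<in> B (Ya a)" if "p \<in> Q" for p
      proof -
        have F: "finite (fin p)" "fin p \<subseteq> Field ?r" "p \<in> B (fin p)" using finQ[OF that] Fr by auto
        have "Field ?r \<noteq> {}" using Fr infY by auto
        then obtain a where a: "a \<in> Field ?r" "fin p \<subseteq> under ?r a" using wo_fin_under[OF wo F(1,2)] by blast
        have "under ?r a \<subseteq> Ya a" unfolding Ya_def using cl_sub by blast
        then show ?thesis using a B_mono[OF _ F(3)] by blast
      qed
      show "almost_omega_op_like Q'" if "a \<in> Field ?r" "Q' \<subseteq> Q" "Q' \<subseteq> B (Ya a)" for a Q'
      proof -
        have inf: "infinite (under ?r a \<union> N0)" using N0(3) by auto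
        have c1: "|Ya a| \<le>o |under ?r a \<union> N0|" unfolding Ya_def by (rule cl_card[OF inf gfin])
        have sub: "under ?r a \<union> N0 \<subseteq> underS ?r a \<union> insert a N0"
          using Refl_under_underS[OF wo_rel.REFL[OF wo] that(1)] by blast
        have l1: "|underS ?r a| <o |Y|" using card_of_underS[OF CO that(1)] .
        have "countable (insert a N0)" using N0(2) by simp
        then have "|insert a N0| \<le>o |UNIV::nat set|" using countable_card_nat by blast
        then have l2: "|insert a N0| <o |Y|" using natY by (rule ordLeq_ordLess_trans)
        have "|underS ?r a \<union> insert a N0| <o |Y|" by (rule card_of_Un_ordLess_infinite[OF infY l1 l2])
        then have "|under ?r a \<union> N0| <o |Y|" using card_of_mono1[OF sub] ordLeq_ordLess_trans by blast
        then have "|Ya a| <o |Y|" using c1 ordLeq_ordLess_trans by blast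
        then have "(Ya a, Y) \<in> inv_image ordLess card_of" by simp
        then show ?thesis using 1(1) YaY YX that(3) by blast
      qed
    qed
  qed
qed

theorem theorem3p2:
  fixes Q :: "'a::boolean_algebra set"
  assumes "free_boolean_algebra TYPE('a)"
  shows "almost_omega_op_like Q"
proof -
  from assms obtain X :: "'a set" where X: "ba_independent X" "ba_generated X = UNIV"
    unfolding free_boolean_algebra_def by blast
  show ?thesis by (rule main_ind[OF X(1) order_refl]) (simp add: X(2))
qed

end
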